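(* Let $\Omega\subset\mathbb{R}^d$ be a bounded Lipschitz domain, $g:[0,\infty)\to[0,\infty)$ continuous and strictly increasing with $g(0)=0$, $0<\alpha\le1$, $\delta,M_1,M_2>0$, $C>0$, and $\beta>d$. Then there exists a constant $\tilde\varepsilon>0$ depending only on $\beta,C,d,\Omega,\delta,\alpha,M_1,M_2,g$ such that for all $0<\varepsilon_2<\tilde\varepsilon$ and all $y\in C^{1,\alpha}(\Omega;\mathbb{R}^d)$ with $$\det\nabla y\ge\delta,\quad |\nabla y|\le M_1\ \text{ on }\Omega,\quad \|\nabla y\|_{C^\alpha(\Omega)}\le M_2,$$ the bound $E^{CN}_{\varepsilon_2}(y)\le C$ implies that $y$ is globally injective on $\Omega$.
   Context: For $\varepsilon_2>0$, $E^{CN}_{\varepsilon_2}(y):=\frac{1}{\varepsilon_2^\beta}\int_{\Omega\times\Omega}\frac{1}{\varepsilon_2^d}\big[g(|\tilde x-x|)-g\big(\tfrac{1}{\varepsilon_2}|y(\tilde x)-y(x)|\big)\big]^+\,d(x,\tilde x)$, with $[a]^+=\max\{0,a\}$ and Euclidean norms. *)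

theory Defs
  imports "HOL-Analysis.Analysis"
begin

definition lipschitz_domain :: "(real^'n) set \<Rightarrow> bool" where
  "lipschitz_domain \<Omega> \<longleftrightarrow>
     \<Omega> \<noteq> {} \<and> bounded \<Omega> \<and> open \<Omega> \<and> connected \<Omega> \<and>
     (\<forall>p \<in> frontier \<Omega>. \<exists>e f L r h.
        norm e = 1 \<and> r > 0 \<and> h > 0 \<and> L \<ge> 0 \<and>
        (\<forall>z1 z2. z1 \<bullet> e = 0 \<longrightarrow> z2 \<bullet> e = 0 \<longrightarrow> \<bar>f z1 - f z2\<bar> \<le> L * norm (z1 - z2)) \<and>
        f 0 = 0 \<and>
        (\<forall>x. let t = (x - p) \<bullet> e; z = (x - p) - t *\<^sub>R e in
              norm z < r \<longrightarrow> \<bar>t\<bar> < h \<longrightarrow> (x \<in> \<Omega> \<longleftrightarrow> t < f z)))"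

definition sup_norm_on :: "(real^'n) set \<Rightarrow> (real^'n \<Rightarrow> real^'n^'n) \<Rightarrow> real" where
  "sup_norm_on S F = Sup ((\<lambda>x. norm (F x)) ` S)"

definition holder_quotients :: "real \<Rightarrow> (real^'n) set \<Rightarrow> (real^'n \<Rightarrow> real^'n^'n) \<Rightarrow> real set" where
  "holder_quotients \<alpha> S F =
     {norm (F x - F z) / (dist x z powr \<alpha>) | x z. x \<in> S \<and> z \<in> S \<and> x \<noteq> z}"

definition holder_seminorm :: "real \<Rightarrow> (real^'n) set \<Rightarrow> (real^'n \<Rightarrow> real^'n^'n) \<Rightarrow> real" where
  "holder_seminorm \<alpha> S F = Sup (holder_quotients \<alpha> S F)"

definition holder_norm :: "real \<Rightarrow> (real^'n) set \<Rightarrow> (real^'n \<Rightarrow> real^'n^'n) \<Rightarrow> real" where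
  "holder_norm \<alpha> S F = sup_norm_on S F + holder_seminorm \<alpha> S F"

definition C1alpha :: "real \<Rightarrow> (real^'n) set \<Rightarrow> (real^'n \<Rightarrow> real^'n) \<Rightarrow> (real^'n \<Rightarrow> real^'n^'n) \<Rightarrow> bool" where
  "C1alpha \<alpha> S y Dy \<longleftrightarrow>
     (\<forall>x \<in> S. (y has_derivative (\<lambda>v. Dy x *v v)) (at x)) \<and>
     continuous_on S Dy \<and>
     bdd_above ((\<lambda>x. norm (Dy x)) ` S) \<and>
     bdd_above (holder_quotients \<alpha> S Dy)"

definition E_CN :: "(real \<Rightarrow> real) \<Rightarrow> real \<Rightarrow> (real^'n) set \<Rightarrow> real \<Rightarrow> (real^'n \<Rightarrow> real^'n) \<Rightarrow> ennreal" where
  "E_CN g \<beta> \<Omega> \<epsilon> y =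
     ennreal (1 / \<epsilon> powr \<beta>) *
     (\<integral>\<^sup>+ w. indicator (\<Omega> \<times> \<Omega>) w *
        ennreal ((1 / \<epsilon> ^ CARD('n)) *
          max 0 (g (dist (snd w) (fst w)) - g (dist (y (snd w)) (y (fst w)) / \<epsilon>))) \<partial>lborel)"

end

theory Submission
  imports Defs
begin


lemma comp_le: "\<bar>(A::real^'n^'m)$i$j\<bar> \<le> norm A"
proof -
  have "\<bar>A$i$j\<bar> \<le> norm (A$i)" by (rule component_le_norm_cart)
  also have "\<dots> \<le> norm A" by (simp add: Finite_Cartesian_Product.norm_nth_le)
  finally show ?thesis .
qed

lemma norm_mv_le:
  fixes A :: "real^'n^'m"
  shows "norm (A *v x) \<le> (real CARD('m) * real CARD('n) * norm A) * norm x"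
proof -
  have "onorm ((*v) A) \<le> real CARD('m) * real CARD('n) * norm A"
    by (rule onorm_le_matrix_component) (rule comp_le)
  moreover have "norm (A *v x) \<le> onorm ((*v) A) * norm x"
    by (rule onorm) (simp add: matrix_vector_mul_bounded_linear)
  ultimately show ?thesis by (meson mult_right_mono norm_ge_zero order_trans)
qed

lemma onorm_mv_le:
  fixes A :: "real^'n^'m"
  shows "onorm ((*v) A) \<le> real CARD('m) * real CARD('n) * norm A"
  by (rule onorm_le_matrix_component) (rule comp_le)

lemma continuous_det: "continuous_on UNIV (det :: real^'n^'n \<Rightarrow> real)"
  unfolding det_def
  by (intro continuous_intros)

lemma det_lower:
  fixes \<delta> M1 :: real assumes "\<delta> > 0"
  shows "\<exists>c0>0. \<forall>(A::real^'n^'n) v. det A \<ge> \<delta> \<and> norm A \<le> M1 \<longrightarrow> c0 * norm v \<le> norm (A *v v)"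
proof -
  define S where "S = {A::real^'n^'n. det A \<ge> \<delta> \<and> norm A \<le> M1} \<times> sphere (0::real^'n) 1"
  have cS: "compact S"
  proof -
    have "closed {A::real^'n^'n. det A \<ge> \<delta>}"
      by (rule closed_Collect_le[OF continuous_on_const continuous_det])
    moreover have "{A::real^'n^'n. det A \<ge> \<delta> \<and> norm A \<le> M1} = {A. det A \<ge> \<delta>} \<inter> cball 0 M1"
      by auto
    ultimately have "compact {A::real^'n^'n. det A \<ge> \<delta> \<and> norm A \<le> M1}"
      by (metis compact_Int_closed compact_cball inf_commute)
    then show ?thesis unfolding S_def by (intro compact_Times) auto
  qed
  show ?thesis
  proof (cases "S = {}")
    case True
    have "c * norm v \<le> norm (A *v v)" if "det A \<ge> \<delta>" "norm A \<le> M1" for A :: "real^'n^'n" and v c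
    proof (cases "v = 0")
      case False
      then have "(A, v /\<^sub>R norm v) \<in> S" using that unfolding S_def by auto
      with True show ?thesis by simp
    qed simp
    then show ?thesis by (metis mult_1 zero_less_one)
  next
    case False
    have "continuous_on S (\<lambda>w::(real^'n^'n)\<times>(real^'n). fst w *v snd w)"
      unfolding matrix_vector_mult_def
      by (intro continuous_intros continuous_on_vec_lambda)
    then have cont: "continuous_on S (\<lambda>w. norm (fst w *v snd w))"
      by (intro continuous_intros)
    obtain w where w: "w \<in> S" "\<And>u. u \<in> S \<Longrightarrow> norm (fst w *v snd w) \<le> norm (fst u *v snd u)"
      using continuous_attains_inf[OF cS False cont] by blast
    have "det (fst w) \<noteq> 0" "snd w \<noteq> 0" using w(1) assms unfolding S_def by auto
    then have pos: "norm (fst w *v snd w) > 0"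
    proof -
      have "invertible (fst w)" using \<open>det (fst w) \<noteq> 0\<close> by (simp add: invertible_det_nz)
      then have "\<exists>B. B ** fst w = mat 1" unfolding invertible_def by blast
      then have "fst w *v snd w \<noteq> 0" using \<open>snd w \<noteq> 0\<close> matrix_left_invertible_ker by blast
      then show ?thesis by simp
    qed
    have "norm (fst w *v snd w) * norm v \<le> norm (A *v v)" if "det A \<ge> \<delta>" "norm A \<le> M1" for A :: "real^'n^'n" and v
    proof (cases "v = 0")
      case False
      then have "(A, v /\<^sub>R norm v) \<in> S" using that unfolding S_def by auto
      then have "norm (fst w *v snd w) \<le> norm (A *v (v /\<^sub>R norm v))" using w(2) by force
      also have "\<dots> = norm (A *v v) / norm v"
        by (simp add: matrix_vector_mult_scaleR divide_inverse_commute)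
      finally show ?thesis using False by (simp add: pos_le_divide_eq)
    qed simp
    then show ?thesis using pos by blast
  qed
qed




lemma proj_facts:
  fixes v e :: "real^'n" assumes e: "norm e = 1"
  shows "norm (v - (v \<bullet> e) *\<^sub>R e) \<le> norm v" "\<bar>v \<bullet> e\<bar> \<le> norm v"
    "(v - (v \<bullet> e) *\<^sub>R e) \<bullet> e = 0"
proof -
  have ee: "e \<bullet> e = 1" using e by (simp add: norm_eq_1)
  show "\<bar>v \<bullet> e\<bar> \<le> norm v" using Cauchy_Schwarz_ineq2[of v e] e by simp
  show "(v - (v \<bullet> e) *\<^sub>R e) \<bullet> e = 0" using ee by (simp add: inner_diff_left)
  have "(v - (v \<bullet> e) *\<^sub>R e) \<bullet> (v - (v \<bullet> e) *\<^sub>R e) = v \<bullet> v - (v \<bullet> e)^2"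
    using ee by (simp add: inner_diff_left inner_diff_right inner_commute algebra_simps power2_eq_square)
  then have "norm (v - (v \<bullet> e) *\<^sub>R e) ^ 2 = norm v ^ 2 - (v \<bullet> e)^2"
    by (simp add: power2_norm_eq_inner)
  then have "norm (v - (v \<bullet> e) *\<^sub>R e) ^ 2 \<le> norm v ^ 2" by simp
  then show "norm (v - (v \<bullet> e) *\<^sub>R e) \<le> norm v" by (simp add: power_mono_iff)
qed

lemma local_geo:
  fixes \<Omega> :: "(real^'n) set" and p e :: "real^'n" and f :: "real^'n \<Rightarrow> real" and r h L :: real
  assumes e: "norm e = 1" and r: "r > 0" and h: "h > 0" and L: "L \<ge> 0"
    and lip: "\<forall>z1 z2. z1 \<bullet> e = 0 \<longrightarrow> z2 \<bullet> e = 0 \<longrightarrow> \<bar>f z1 - f z2\<bar> \<le> L * norm (z1 - z2)"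
    and f0: "f 0 = 0"
    and loc: "\<forall>x. let t = (x - p) \<bullet> e; z = (x - p) - t *\<^sub>R e in
              norm z < r \<longrightarrow> \<bar>t\<bar> < h \<longrightarrow> (x \<in> \<Omega> \<longleftrightarrow> t < f z)"
  defines "\<eta> \<equiv> min (r/2) (h/(2*L+4))"
  shows "\<eta> > 0"
    and "\<And>a b. a \<in> \<Omega> \<Longrightarrow> b \<in> \<Omega> \<Longrightarrow> dist a p < \<eta> \<Longrightarrow> dist b p < \<eta> \<Longrightarrow>
          \<exists>p1 p2. closed_segment a p1 \<subseteq> \<Omega> \<and> closed_segment p1 p2 \<subseteq> \<Omega> \<and> closed_segment p2 b \<subseteq> \<Omega> \<and>
             dist a p1 + dist p1 p2 + dist p2 b \<le> (2*L+2) * dist a b"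
    and "\<And>a \<rho>. a \<in> \<Omega> \<Longrightarrow> dist a p < \<eta> \<Longrightarrow> 0 < \<rho> \<Longrightarrow> \<rho> \<le> \<eta> \<Longrightarrow>
          \<exists>c. closed_segment a c \<subseteq> \<Omega> \<and> dist a c \<le> \<rho> \<and> ball c (\<rho>/(2*L+2)) \<subseteq> \<Omega>"
proof -
  show etapos: "\<eta> > 0" unfolding \<eta>_def using r h L by simp
  have eta_r: "2*\<eta> \<le> r" unfolding \<eta>_def by linarith
  have "\<eta> \<le> h/(2*L+4)" unfolding \<eta>_def by linarith
  then have "(2*L+4)*\<eta> \<le> (2*L+4)*(h/(2*L+4))" using L by (intro mult_left_mono) auto
  then have eta_h: "(2*L+4)*\<eta> \<le> h" using L by simp
  have hh: "2 * \<eta> < h"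
  proof -
    have "4 * \<eta> \<le> (2*L+4)*\<eta>" using L etapos by (intro mult_right_mono) auto
    then show ?thesis using eta_h etapos by linarith
  qed
  define T where "T x = (x - p) \<bullet> e" for x
  define Z where "Z x = (x - p) - T x *\<^sub>R e" for x
  have ee: "e \<bullet> e = 1" using e by (simp add: norm_eq_1)
  have Ze: "Z x \<bullet> e = 0" for x unfolding Z_def T_def using proj_facts(3)[OF e] by blast
  have Tdiff: "T u - T v = (u - v) \<bullet> e" for u v unfolding T_def by (simp add: inner_diff_left)
  have Zdiff: "Z u - Z v = (u - v) - ((u - v) \<bullet> e) *\<^sub>R e" for u v
    unfolding Z_def using Tdiff[of u v] by (simp add: algebra_simps flip: scaleR_diff_left)
  have Zd: "norm (Z u - Z v) \<le> dist u v" for u v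
    unfolding Zdiff dist_norm using proj_facts(1)[OF e] by blast
  have Td: "\<bar>T u - T v\<bar> \<le> dist u v" for u v
    unfolding Tdiff dist_norm using proj_facts(2)[OF e] by blast
  have Zp: "norm (Z u) \<le> dist u p" for u
    unfolding Z_def T_def dist_norm using proj_facts(1)[OF e] by blast
  have Tp: "\<bar>T u\<bar> \<le> dist u p" for u
    unfolding T_def dist_norm using proj_facts(2)[OF e] by blast
  have memb: "x \<in> \<Omega> \<longleftrightarrow> T x < f (Z x)" if "norm (Z x) < r" "\<bar>T x\<bar> < h" for x
    using loc[rule_format, of x] that unfolding Z_def T_def Let_def by blast
  have flip: "\<bar>f (Z u) - f (Z v)\<bar> \<le> L * norm (Z u - Z v)" for u v
    using lip Ze by blast
  have Tshift: "T (x - c *\<^sub>R e) = T x - c" for x c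
    unfolding T_def using ee by (simp add: inner_diff_left algebra_simps)
  have Zshift: "Z (x - c *\<^sub>R e) = Z x" for x c
    unfolding Z_def Tshift unfolding T_def by (simp add: algebra_simps)
  have Tcomb: "T ((1 - s) *\<^sub>R x + s *\<^sub>R y) = (1 - s) * T x + s * T y" for x y s
    unfolding T_def by (simp add: algebra_simps inner_add_left inner_diff_left)
  have Zcomb: "Z ((1 - s) *\<^sub>R x + s *\<^sub>R y) = (1 - s) *\<^sub>R Z x + s *\<^sub>R Z y" for x y s
    unfolding Z_def Tcomb by (simp add: algebra_simps)
  have inO: "x \<in> \<Omega>" if "norm (Z x) < r" "\<bar>T x\<bar> < h" "T x < f (Z x)" for x
    using memb that by blast
  have aO: "T a < f (Z a)" if "a \<in> \<Omega>" "dist a p < \<eta>" for a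
  proof -
    have "norm (Z a) < r" using Zp[of a] that eta_r etapos by linarith
    moreover have "\<bar>T a\<bar> < h" using Tp[of a] that hh etapos by linarith
    ultimately show ?thesis using memb[of a] that by blast
  qed
  have vert: "closed_segment a (a - c *\<^sub>R e) \<subseteq> \<Omega>" if "a \<in> \<Omega>" "dist a p < \<eta>" "0 \<le> c" "\<bar>T a - c\<bar> < h" for a c
  proof
    fix u assume "u \<in> closed_segment a (a - c *\<^sub>R e)"
    then obtain s where s: "0 \<le> s" "s \<le> 1" "u = (1 - s) *\<^sub>R a + s *\<^sub>R (a - c *\<^sub>R e)"
      unfolding closed_segment_def by blast
    have u: "u = a - (s * c) *\<^sub>R e" using s(3) by (simp add: algebra_simps)
    have "T u = T a - s * c" "Z u = Z a" unfolding u Tshift Zshift by auto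
    moreover have "s * c \<le> c" using s that(3) by (simp add: mult_left_le_one_le)
    moreover have "\<bar>T a\<bar> < h" using Tp[of a] that hh etapos by linarith
    moreover have "norm (Z a) < r" using Zp[of a] that eta_r etapos by linarith
    moreover have "0 \<le> s * c" using s that by simp
    ultimately have "norm (Z u) < r" "\<bar>T u\<bar> < h" "T u < f (Z u)"
      using aO[OF that(1,2)] that(4) by auto
    then show "u \<in> \<Omega>" by (rule inO)
  qed
  show "\<exists>p1 p2. closed_segment a p1 \<subseteq> \<Omega> \<and> closed_segment p1 p2 \<subseteq> \<Omega> \<and> closed_segment p2 b \<subseteq> \<Omega> \<and>
             dist a p1 + dist p1 p2 + dist p2 b \<le> (2*L+2) * dist a b"
    if a: "a \<in> \<Omega>" "dist a p < \<eta>" and b: "b \<in> \<Omega>" "dist b p < \<eta>" for a b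
  proof -
    define m where "m = min (T a) (T b) - L * norm (Z a - Z b)"
    define p1 where "p1 = a - (T a - m) *\<^sub>R e"
    define p2 where "p2 = b - (T b - m) *\<^sub>R e"
    have nZab: "norm (Z a - Z b) < 2 * \<eta>"
      using Zp[of a] Zp[of b] a b norm_triangle_ineq4[of "Z a" "Z b"] by linarith
    have Tah: "\<bar>T a\<bar> < \<eta>" "\<bar>T b\<bar> < \<eta>" using Tp a b by (meson le_less_trans)+
    have mh: "\<bar>m\<bar> < h"
    proof -
      have "L * norm (Z a - Z b) \<le> L * (2 * \<eta>)" using nZab L by (simp add: mult_left_mono)
      then show ?thesis
      proof -
        have "(2*L+4)*\<eta> = 2*(L*\<eta>) + 4*\<eta>" "L * (2 * \<eta>) = 2*(L*\<eta>)" by (simp_all add: algebra_simps)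
        moreover have "0 \<le> L * norm (Z a - Z b)" using L by simp
        ultimately show ?thesis using \<open>L * norm (Z a - Z b) \<le> L * (2 * \<eta>)\<close> Tah eta_h etapos
          unfolding m_def by (simp add: min_def abs_if split: if_splits)
      qed
    qed
    have "0 \<le> L * norm (Z a - Z b)" using L by simp
    then have ma: "m \<le> T a" "m \<le> T b" unfolding m_def by linarith+
    have s1: "closed_segment a p1 \<subseteq> \<Omega>" unfolding p1_def
      by (rule vert[OF a]) (use ma mh in auto)
    have s3': "closed_segment b p2 \<subseteq> \<Omega>" unfolding p2_def
      by (rule vert[OF b]) (use ma mh in auto)
    have s3: "closed_segment p2 b \<subseteq> \<Omega>" using s3' by (simp add: closed_segment_commute)
    have Tp1: "T p1 = m" "Z p1 = Z a" "T p2 = m" "Z p2 = Z b"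
      unfolding p1_def p2_def Tshift Zshift by auto
    have s2: "closed_segment p1 p2 \<subseteq> \<Omega>"
    proof
      fix u assume "u \<in> closed_segment p1 p2"
      then obtain s where s: "0 \<le> s" "s \<le> 1" "u = (1 - s) *\<^sub>R p1 + s *\<^sub>R p2"
        unfolding closed_segment_def by blast
      have TZu: "T u = m" "Z u = (1 - s) *\<^sub>R Z a + s *\<^sub>R Z b"
        unfolding s(3) Tcomb Zcomb Tp1 by (auto simp: algebra_simps)
      have "norm (Z u) \<le> (1 - s) * norm (Z a) + s * norm (Z b)"
        unfolding TZu using s norm_triangle_ineq[of "(1 - s) *\<^sub>R Z a" "s *\<^sub>R Z b"] by simp
      also have "\<dots> < \<eta>"
      proof -
        have "norm (Z a) < \<eta>" using Zp a by (meson le_less_trans)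
        moreover have "norm (Z b) < \<eta>" using Zp b by (meson le_less_trans)
        ultimately show ?thesis
        proof -
          define M where "M = max (norm (Z a)) (norm (Z b))"
          have "(1 - s) * norm (Z a) \<le> (1 - s) * M" "s * norm (Z b) \<le> s * M"
            unfolding M_def using s by (auto intro!: mult_left_mono)
          moreover have "(1 - s) * M + s * M = M" by (simp add: algebra_simps)
          moreover have "M < \<eta>" unfolding M_def using \<open>norm (Z a) < \<eta>\<close> \<open>norm (Z b) < \<eta>\<close> by simp
          ultimately show ?thesis by linarith
        qed
      qed
      finally have nZu: "norm (Z u) < \<eta>" .
      have "Z u - Z a = s *\<^sub>R (Z b - Z a)" unfolding TZu by (simp add: algebra_simps)
      then have "norm (Z u - Z a) \<le> norm (Z a - Z b)" using s
        by (simp add: norm_minus_commute mult_left_le_one_le)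
      then have "f (Z u) \<ge> f (Z a) - L * norm (Z a - Z b)"
      proof -
        have "L * norm (Z u - Z a) \<le> L * norm (Z a - Z b)" using L \<open>norm (Z u - Z a) \<le> norm (Z a - Z b)\<close> by (rule mult_left_mono[rotated])
        then show ?thesis using flip[of u a] by linarith
      qed
      then have "T u < f (Z u)" using aO[OF a] unfolding TZu m_def by linarith
      then show "u \<in> \<Omega>" using inO[of u] nZu eta_r etapos mh TZu by force
    qed
    have d1: "dist a p1 = T a - m" unfolding p1_def dist_norm using e ma by simp
    have d3: "dist p2 b = T b - m" unfolding p2_def dist_norm using e ma by simp
    have "p1 - p2 = Z a - Z b" unfolding p1_def p2_def Z_def by (simp add: algebra_simps)
    then have d2: "dist p1 p2 = norm (Z a - Z b)" by (simp add: dist_norm)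
    have "dist a p1 + dist p1 p2 + dist p2 b = \<bar>T a - T b\<bar> + (2*L+1) * norm (Z a - Z b)"
      unfolding d1 d2 d3 m_def by (cases "T a \<le> T b") (simp_all add: min_def abs_if algebra_simps)
    also have "\<dots> \<le> dist a b + (2*L+1) * dist a b"
    proof -
      have "(2*L+1) * norm (Z a - Z b) \<le> (2*L+1) * dist a b" using Zd[of a b] L by (intro mult_left_mono) auto
      then show ?thesis using Td[of a b] by linarith
    qed
    finally show ?thesis using s1 s2 s3 by (intro exI[of _ p1] exI[of _ p2]) (auto simp: algebra_simps)
  qed
  show "\<exists>c. closed_segment a c \<subseteq> \<Omega> \<and> dist a c \<le> \<rho> \<and> ball c (\<rho>/(2*L+2)) \<subseteq> \<Omega>"
    if a: "a \<in> \<Omega>" "dist a p < \<eta>" and rho: "0 < \<rho>" "\<rho> \<le> \<eta>" for a \<rho>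
  proof -
    define c where "c = a - (\<rho>/2) *\<^sub>R e"
    have Tah: "\<bar>T a\<bar> < \<eta>" using Tp a by (meson le_less_trans)
    have Zah: "norm (Z a) < \<eta>" using Zp a by (meson le_less_trans)
    have s1: "closed_segment a c \<subseteq> \<Omega>" unfolding c_def
      by (rule vert[OF a]) (use rho Tah hh in auto)
    have dc: "dist a c = \<rho>/2" unfolding c_def dist_norm using e rho by simp
    have Tc: "T c = T a - \<rho>/2" "Z c = Z a" unfolding c_def Tshift Zshift by auto
    have "ball c (\<rho>/(2*L+2)) \<subseteq> \<Omega>"
    proof
      fix u assume "u \<in> ball c (\<rho>/(2*L+2))"
      then have du: "dist u c < \<rho>/(2*L+2)" by (simp add: dist_commute)
      define r1 where "r1 = \<rho>/(2*L+2)"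
      have r1: "(L+1) * r1 = \<rho>/2" "r1 \<le> \<rho>/2" "0 < r1" unfolding r1_def using L rho
        by (auto simp: field_simps)
      have z1: "norm (Z u - Z a) < r1" using Zd[of u c] du Tc unfolding r1_def by simp
      have t1: "\<bar>T u - T c\<bar> < r1" using Td[of u c] du unfolding r1_def by simp
      have "norm (Z u) < r" using z1 Zah r1 rho eta_r norm_triangle_ineq2[of "Z u" "Z a"] by linarith
      moreover have "\<bar>T u\<bar> < h" using t1 Tah Tc r1 rho hh by linarith
      moreover have "f (Z u) \<ge> f (Z a) - L * r1"
      proof -
        have "L * norm (Z u - Z a) \<le> L * r1" using L z1 by (intro mult_left_mono) auto
        then show ?thesis using flip[of u a] by linarith
      qed
      moreover have "T u < T a - \<rho>/2 + r1" using t1 Tc by linarith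
      moreover have "(L+1) * r1 = L * r1 + r1" by (simp add: algebra_simps)
      ultimately have "T u < f (Z u)" using aO[OF a] r1(1) by linarith
      then show "u \<in> \<Omega>" using inO \<open>norm (Z u) < r\<close> \<open>\<bar>T u\<bar> < h\<close> by blast
    qed
    then show ?thesis using s1 dc rho by (intro exI[of _ c]) auto
  qed
qed




lemma global_geo:
  fixes \<Omega> :: "(real^'n) set"
  assumes LD: "lipschitz_domain \<Omega>"
  shows "\<exists>R0>0. \<exists>K\<ge>1. \<exists>\<kappa>>0. \<kappa> \<le> 1 \<and>
    (\<forall>a\<in>\<Omega>. \<forall>b\<in>\<Omega>. dist a b < R0 \<longrightarrow> (\<exists>p1 p2. closed_segment a p1 \<subseteq> \<Omega> \<and> closed_segment p1 p2 \<subseteq> \<Omega> \<and>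
        closed_segment p2 b \<subseteq> \<Omega> \<and> dist a p1 + dist p1 p2 + dist p2 b \<le> K * dist a b)) \<and>
    (\<forall>a\<in>\<Omega>. \<forall>\<rho>. 0 < \<rho> \<and> \<rho> \<le> R0 \<longrightarrow> (\<exists>c. closed_segment a c \<subseteq> \<Omega> \<and> dist a c \<le> \<rho> \<and> ball c (\<kappa> * \<rho>) \<subseteq> \<Omega>))"
proof -
  have bdd: "bounded \<Omega>" and opn: "open \<Omega>" and conn: "connected \<Omega>"
    using LD unfolding lipschitz_domain_def by auto
  define QP where "QP p \<eta> L \<longleftrightarrow> (\<forall>a b. a \<in> \<Omega> \<longrightarrow> b \<in> \<Omega> \<longrightarrow> dist a p < \<eta> \<longrightarrow> dist b p < \<eta> \<longrightarrow>
          (\<exists>p1 p2. closed_segment a p1 \<subseteq> \<Omega> \<and> closed_segment p1 p2 \<subseteq> \<Omega> \<and> closed_segment p2 b \<subseteq> \<Omega> \<and>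
             dist a p1 + dist p1 p2 + dist p2 b \<le> (2*L+2) * dist a b))" for p :: "real^'n" and \<eta> L :: real
  define PP where "PP p \<eta> L \<longleftrightarrow> (\<forall>a \<rho>. a \<in> \<Omega> \<longrightarrow> dist a p < \<eta> \<longrightarrow> 0 < \<rho> \<longrightarrow> \<rho> \<le> \<eta> \<longrightarrow>
          (\<exists>c. closed_segment a c \<subseteq> \<Omega> \<and> dist a c \<le> \<rho> \<and> ball c (\<rho>/(2*L+2)) \<subseteq> \<Omega>))" for p :: "real^'n" and \<eta> L :: real
  have ex: "\<forall>p\<in>frontier \<Omega>. \<exists>\<eta>L. fst \<eta>L > 0 \<and> snd \<eta>L \<ge> 0 \<and> QP p (fst \<eta>L) (snd \<eta>L) \<and> PP p (fst \<eta>L) (snd \<eta>L)"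
  proof
    fix p assume "p \<in> frontier \<Omega>"
    then obtain e f L r h where d: "norm e = 1" "r > 0" "h > 0" "L \<ge> 0"
        "\<forall>z1 z2. z1 \<bullet> e = 0 \<longrightarrow> z2 \<bullet> e = 0 \<longrightarrow> \<bar>f z1 - f z2\<bar> \<le> L * norm (z1 - z2)"
        "f 0 = 0"
        "\<forall>x. let t = (x - p) \<bullet> e; z = (x - p) - t *\<^sub>R e in
              norm z < r \<longrightarrow> \<bar>t\<bar> < h \<longrightarrow> (x \<in> \<Omega> \<longleftrightarrow> t < f z)"
      using LD unfolding lipschitz_domain_def by blast
    note lg = local_geo[OF d]
    have "QP p (min (r/2) (h/(2*L+4))) L" unfolding QP_def using lg(2) by blast
    moreover have "PP p (min (r/2) (h/(2*L+4))) L" unfolding PP_def using lg(3) by blast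
    ultimately show "\<exists>\<eta>L. fst \<eta>L > 0 \<and> snd \<eta>L \<ge> 0 \<and> QP p (fst \<eta>L) (snd \<eta>L) \<and> PP p (fst \<eta>L) (snd \<eta>L)"
      using lg(1) d(4) by (intro exI[of _ "(min (r/2) (h/(2*L+4)), L)"]) simp
  qed
  obtain g where g: "\<forall>p\<in>frontier \<Omega>. fst (g p) > 0 \<and> snd (g p) \<ge> 0 \<and> QP p (fst (g p)) (snd (g p)) \<and> PP p (fst (g p)) (snd (g p))"
    using bchoice[OF ex] by blast
  define \<eta>f where "\<eta>f p = fst (g p)" for p
  define Lf where "Lf p = snd (g p)" for p
  have H1: "\<eta>f p > 0" "Lf p \<ge> 0" "QP p (\<eta>f p) (Lf p)" "PP p (\<eta>f p) (Lf p)" if "p \<in> frontier \<Omega>" for p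
    using g that unfolding \<eta>f_def Lf_def by auto
  have H: "\<eta>f p > 0 \<and> Lf p \<ge> 0 \<and>
     (\<forall>a b. a \<in> \<Omega> \<longrightarrow> b \<in> \<Omega> \<longrightarrow> dist a p < \<eta>f p \<longrightarrow> dist b p < \<eta>f p \<longrightarrow>
          (\<exists>p1 p2. closed_segment a p1 \<subseteq> \<Omega> \<and> closed_segment p1 p2 \<subseteq> \<Omega> \<and> closed_segment p2 b \<subseteq> \<Omega> \<and>
             dist a p1 + dist p1 p2 + dist p2 b \<le> (2*Lf p+2) * dist a b)) \<and>
     (\<forall>a \<rho>. a \<in> \<Omega> \<longrightarrow> dist a p < \<eta>f p \<longrightarrow> 0 < \<rho> \<longrightarrow> \<rho> \<le> \<eta>f p \<longrightarrow>
          (\<exists>c. closed_segment a c \<subseteq> \<Omega> \<and> dist a c \<le> \<rho> \<and> ball c (\<rho>/(2*Lf p+2)) \<subseteq> \<Omega>))"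
    if "p \<in> frontier \<Omega>" for p
    using H1[OF that] unfolding QP_def PP_def by blast
  have cf: "compact (frontier \<Omega>)" using bdd by (rule compact_frontier_bounded)
  have "frontier \<Omega> \<subseteq> (\<Union>p\<in>frontier \<Omega>. ball p (\<eta>f p / 4))"
  proof
    fix q assume q: "q \<in> frontier \<Omega>"
    then have "q \<in> ball q (\<eta>f q / 4)" using H1(1)[OF q] by simp
    then show "q \<in> (\<Union>p\<in>frontier \<Omega>. ball p (\<eta>f p / 4))" using q by blast
  qed
  then obtain F where F: "F \<subseteq> frontier \<Omega>" "finite F" "frontier \<Omega> \<subseteq> (\<Union>p\<in>F. ball p (\<eta>f p / 4))"
    using compactE_image[OF cf, of "frontier \<Omega>" "\<lambda>p. ball p (\<eta>f p / 4)"] by blast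
  define \<eta>0 where "\<eta>0 = Min (insert 1 ((\<lambda>p. \<eta>f p / 4) ` F))"
  define K where "K = Max (insert 1 ((\<lambda>p. 2 * Lf p + 2) ` F))"
  define \<kappa> where "\<kappa> = Min (insert 1 ((\<lambda>p. 1 / (2 * Lf p + 2)) ` F))"
  have \<eta>0pos: "\<eta>0 > 0" unfolding \<eta>0_def using F H by (auto simp: Min_gr_iff)
  have \<eta>0le: "\<eta>0 \<le> \<eta>f p / 4" if "p \<in> F" for p unfolding \<eta>0_def
    using F(2) that by (intro Min_le) auto
  have K1: "K \<ge> 1" unfolding K_def using F by auto
  have Kle: "2 * Lf p + 2 \<le> K" if "p \<in> F" for p unfolding K_def using F that by auto
  have Lpos: "0 < 2 * Lf p + 2" if "p \<in> F" for p using H[of p] F that by force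
  have \<kappa>pos: "\<kappa> > 0" unfolding \<kappa>_def using F Lpos by (auto simp: Min_gr_iff)
  have \<kappa>1: "\<kappa> \<le> 1" unfolding \<kappa>_def using F by auto
  have \<kappa>le: "\<kappa> \<le> 1 / (2 * Lf p + 2)" if "p \<in> F" for p unfolding \<kappa>_def using F that by auto
  have cs: "ball a (2 * \<eta>0) \<subseteq> \<Omega> \<or> (\<exists>p\<in>F. dist a p < \<eta>f p - \<eta>0)" if "a \<in> \<Omega>" for a
  proof (cases "ball a (2 * \<eta>0) \<inter> frontier \<Omega> = {}")
    case True
    have "ball a (2 * \<eta>0) \<subseteq> \<Omega>"
    proof (rule ccontr)
      assume "\<not> ball a (2 * \<eta>0) \<subseteq> \<Omega>"
      then have "ball a (2 * \<eta>0) - \<Omega> \<noteq> {}" by blast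
      moreover have "a \<in> ball a (2 * \<eta>0) \<inter> \<Omega>" using that \<eta>0pos by auto
      then have "ball a (2 * \<eta>0) \<inter> \<Omega> \<noteq> {}" by blast
      ultimately have "ball a (2 * \<eta>0) \<inter> frontier \<Omega> \<noteq> {}"
        by (intro connected_Int_frontier) auto
      with True show False by simp
    qed
    then show ?thesis by blast
  next
    case False
    then obtain q where q: "q \<in> frontier \<Omega>" "dist a q < 2 * \<eta>0" by (auto simp: dist_commute)
    then obtain p where p: "p \<in> F" "dist p q < \<eta>f p / 4" using F(3) by auto
    have "dist a p \<le> dist a q + dist p q" by (simp add: dist_triangle2)
    then have "dist a p < \<eta>f p - \<eta>0" using p q \<eta>0le[OF p(1)] by linarith
    then show ?thesis using p by blast
  qed
  have Qg: "\<forall>a\<in>\<Omega>. \<forall>b\<in>\<Omega>. dist a b < \<eta>0 \<longrightarrow> (\<exists>p1 p2. closed_segment a p1 \<subseteq> \<Omega> \<and> closed_segment p1 p2 \<subseteq> \<Omega> \<and>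
        closed_segment p2 b \<subseteq> \<Omega> \<and> dist a p1 + dist p1 p2 + dist p2 b \<le> K * dist a b)"
  proof (intro ballI impI)
    fix a b assume ab: "a \<in> \<Omega>" "b \<in> \<Omega>" "dist a b < \<eta>0"
    show "\<exists>p1 p2. closed_segment a p1 \<subseteq> \<Omega> \<and> closed_segment p1 p2 \<subseteq> \<Omega> \<and>
        closed_segment p2 b \<subseteq> \<Omega> \<and> dist a p1 + dist p1 p2 + dist p2 b \<le> K * dist a b"
    proof (cases "ball a (2 * \<eta>0) \<subseteq> \<Omega>")
      case True
      have "closed_segment a b \<subseteq> ball a (2 * \<eta>0)"
        by (rule closed_segment_subset) (use ab \<eta>0pos in auto)
      then have "closed_segment a b \<subseteq> \<Omega>" using True by blast
      moreover have "dist a b \<le> K * dist a b" using K1 by (simp add: mult_le_cancel_right1)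
      ultimately show ?thesis using ab by (intro exI[of _ a] exI[of _ a]) auto
    next
      case False
      then obtain p where p: "p \<in> F" "dist a p < \<eta>f p - \<eta>0" using cs ab by blast
      have "dist b p \<le> dist a b + dist a p" using dist_triangle[of b p a] by (simp add: dist_commute)
      then have "dist b p < \<eta>f p" using p ab by linarith
      moreover have "dist a p < \<eta>f p" using p \<eta>0pos by linarith
      ultimately obtain p1 p2 where "closed_segment a p1 \<subseteq> \<Omega>" "closed_segment p1 p2 \<subseteq> \<Omega>"
        "closed_segment p2 b \<subseteq> \<Omega>" "dist a p1 + dist p1 p2 + dist p2 b \<le> (2*Lf p+2) * dist a b"
        using H1(3)[of p] p F(1) ab unfolding QP_def by blast
      moreover have "(2*Lf p+2) * dist a b \<le> K * dist a b" using Kle[OF p(1)] by (simp add: mult_right_mono)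
      ultimately show ?thesis by (meson order_trans)
    qed
  qed
  have Pg: "\<forall>a\<in>\<Omega>. \<forall>\<rho>. 0 < \<rho> \<and> \<rho> \<le> \<eta>0 \<longrightarrow> (\<exists>c. closed_segment a c \<subseteq> \<Omega> \<and> dist a c \<le> \<rho> \<and> ball c (\<kappa> * \<rho>) \<subseteq> \<Omega>)"
  proof (intro ballI allI impI)
    fix a \<rho> assume a: "a \<in> \<Omega>" and rho: "0 < \<rho> \<and> \<rho> \<le> \<eta>0"
    show "\<exists>c. closed_segment a c \<subseteq> \<Omega> \<and> dist a c \<le> \<rho> \<and> ball c (\<kappa> * \<rho>) \<subseteq> \<Omega>"
    proof (cases "ball a (2 * \<eta>0) \<subseteq> \<Omega>")
      case True
      have "\<kappa> * \<rho> \<le> \<rho>" using \<kappa>1 \<kappa>pos rho by (intro mult_left_le_one_le) auto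
      then have "\<kappa> * \<rho> \<le> 2 * \<eta>0" using rho by linarith
      then have "ball a (\<kappa> * \<rho>) \<subseteq> \<Omega>" using True by (meson order_trans subset_ball)
      then show ?thesis using a rho by (intro exI[of _ a]) auto
    next
      case False
      then obtain p where p: "p \<in> F" "dist a p < \<eta>f p - \<eta>0" using cs a by blast
      have "dist a p < \<eta>f p" using p \<eta>0pos by linarith
      moreover have "\<rho> \<le> \<eta>f p"
      proof -
        have "\<eta>f p > 0" using H[of p] p(1) F(1) by blast
        then show ?thesis using \<eta>0le[OF p(1)] rho by linarith
      qed
      ultimately obtain c where c: "closed_segment a c \<subseteq> \<Omega>" "dist a c \<le> \<rho>" "ball c (\<rho>/(2*Lf p+2)) \<subseteq> \<Omega>"
        using H1(4)[of p] p F(1) a rho unfolding PP_def by blast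
      have "\<kappa> * \<rho> \<le> \<rho>/(2*Lf p+2)" using \<kappa>le[OF p(1)] rho
      proof -
        have "\<kappa> * \<rho> \<le> (1 / (2 * Lf p + 2)) * \<rho>" using \<kappa>le[OF p(1)] rho by (intro mult_right_mono) auto
        then show ?thesis by simp
      qed
      then have "ball c (\<kappa> * \<rho>) \<subseteq> \<Omega>" using c(3) by (meson order_trans subset_ball)
      then show ?thesis using c by blast
    qed
  qed
  show ?thesis
    apply (rule exI[of _ \<eta>0], rule conjI[OF \<eta>0pos])
    apply (rule exI[of _ K], rule conjI[OF K1])
    apply (rule exI[of _ \<kappa>], rule conjI[OF \<kappa>pos])
    using \<kappa>1 Qg Pg by blast
qed




lemma seg_lip:
  fixes y :: "real^'n \<Rightarrow> real^'n" and Dy :: "real^'n \<Rightarrow> real^'n^'n"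
  assumes der: "\<forall>x\<in>\<Omega>. (y has_derivative (\<lambda>v. Dy x *v v)) (at x)"
    and bd: "\<forall>x\<in>\<Omega>. norm (Dy x) \<le> M1"
    and seg: "closed_segment u v \<subseteq> \<Omega>"
  shows "norm (y u - y v) \<le> (real CARD('n) * real CARD('n) * M1) * dist u v"
proof -
  have "norm (y u - y v) \<le> (real CARD('n) * real CARD('n) * M1) * norm (u - v)"
  proof (rule differentiable_bound[of "closed_segment u v" y "\<lambda>x. (*v) (Dy x)"])
    show "convex (closed_segment u v)" by simp
    show "(y has_derivative (*v) (Dy x)) (at x within closed_segment u v)" if "x \<in> closed_segment u v" for x
    proof -
      have "(y has_derivative (\<lambda>v. Dy x *v v)) (at x)" using der seg that by blast
      then show ?thesis by (rule has_derivative_at_withinI)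
    qed
    show "onorm ((*v) (Dy x)) \<le> real CARD('n) * real CARD('n) * M1" if "x \<in> closed_segment u v" for x
    proof -
      have "onorm ((*v) (Dy x)) \<le> real CARD('n) * real CARD('n) * norm (Dy x)" by (rule onorm_mv_le)
      also have "\<dots> \<le> real CARD('n) * real CARD('n) * M1"
      proof -
        have "x \<in> \<Omega>" using seg that by blast
        then have "norm (Dy x) \<le> M1" using bd by blast
        then show ?thesis by (rule mult_left_mono) simp
      qed
      finally show ?thesis .
    qed
  qed auto
  then show ?thesis by (simp add: dist_norm)
qed

lemma seg_phi:
  fixes y :: "real^'n \<Rightarrow> real^'n" and Dy :: "real^'n \<Rightarrow> real^'n^'n"
  assumes der: "\<forall>x\<in>\<Omega>. (y has_derivative (\<lambda>v. Dy x *v v)) (at x)"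
    and hol: "\<forall>x\<in>\<Omega>. \<forall>z\<in>\<Omega>. norm (Dy x - Dy z) \<le> M2 * dist x z powr \<alpha>"
    and M2: "M2 \<ge> 0" and al: "\<alpha> > 0" and a: "a \<in> \<Omega>"
    and seg: "closed_segment u v \<subseteq> \<Omega>" and close: "\<forall>x\<in>closed_segment u v. dist x a \<le> T"
  shows "norm ((y u - Dy a *v u) - (y v - Dy a *v v)) \<le> (real CARD('n) * real CARD('n) * M2 * T powr \<alpha>) * dist u v"
proof -
  let ?N = "real CARD('n) * real CARD('n)"
  have "norm ((\<lambda>x. y x - Dy a *v x) u - (\<lambda>x. y x - Dy a *v x) v) \<le> (?N * M2 * T powr \<alpha>) * norm (u - v)"
  proof (rule differentiable_bound[of "closed_segment u v" _ "\<lambda>x. (*v) (Dy x - Dy a)"])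
    show "convex (closed_segment u v)" by simp
    show "((\<lambda>x. y x - Dy a *v x) has_derivative (*v) (Dy x - Dy a)) (at x within closed_segment u v)"
      if "x \<in> closed_segment u v" for x
    proof -
      have hd: "((\<lambda>x. y x - Dy a *v x) has_derivative (\<lambda>h. Dy x *v h - Dy a *v h)) (at x)"
      proof -
        have "(y has_derivative (\<lambda>v. Dy x *v v)) (at x)" using der seg that by blast
        moreover have "((\<lambda>x. Dy a *v x) has_derivative (\<lambda>h. Dy a *v h)) (at x)"
          by (rule bounded_linear.has_derivative[OF matrix_vector_mul_bounded_linear has_derivative_ident])
        ultimately show ?thesis by (rule has_derivative_diff)
      qed
      have eq: "(\<lambda>h. Dy x *v h - Dy a *v h) = (*v) (Dy x - Dy a)"
        by (rule ext) (simp add: matrix_vector_mult_diff_rdistrib)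
      show ?thesis using hd unfolding eq by (rule has_derivative_at_withinI)
    qed
    show "onorm ((*v) (Dy x - Dy a)) \<le> ?N * M2 * T powr \<alpha>" if "x \<in> closed_segment u v" for x
    proof -
      have "onorm ((*v) (Dy x - Dy a)) \<le> ?N * norm (Dy x - Dy a)" by (rule onorm_mv_le)
      also have "\<dots> \<le> ?N * (M2 * dist x a powr \<alpha>)"
      proof -
        have "x \<in> \<Omega>" using seg that by blast
        then have "norm (Dy x - Dy a) \<le> M2 * dist x a powr \<alpha>" using hol a by blast
        then show ?thesis by (rule mult_left_mono) simp
      qed
      also have "\<dots> \<le> ?N * (M2 * T powr \<alpha>)"
      proof -
        have "dist x a powr \<alpha> \<le> T powr \<alpha>" using close that al by (intro powr_mono2) auto
        then have "M2 * dist x a powr \<alpha> \<le> M2 * T powr \<alpha>" using M2 by (rule mult_left_mono)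
        then show ?thesis by (rule mult_left_mono) simp
      qed
      finally show ?thesis by (simp add: mult.assoc)
    qed
  qed auto
  then show ?thesis by (simp add: dist_norm)
qed

lemma local_inj:
  fixes y :: "real^'n \<Rightarrow> real^'n" and Dy :: "real^'n \<Rightarrow> real^'n^'n"
  assumes der: "\<forall>x\<in>\<Omega>. (y has_derivative (\<lambda>v. Dy x *v v)) (at x)"
    and hol: "\<forall>x\<in>\<Omega>. \<forall>z\<in>\<Omega>. norm (Dy x - Dy z) \<le> M2 * dist x z powr \<alpha>"
    and M2: "M2 \<ge> 0" and al: "\<alpha> > 0" and a: "a \<in> \<Omega>" and b: "b \<in> \<Omega>"
    and K: "K \<ge> 1"
    and path: "closed_segment a p1 \<subseteq> \<Omega>" "closed_segment p1 p2 \<subseteq> \<Omega>" "closed_segment p2 b \<subseteq> \<Omega>"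
      "dist a p1 + dist p1 p2 + dist p2 b \<le> K * dist a b"
    and c0: "\<forall>v. c0 * norm v \<le> norm (Dy a *v v)"
    and yab: "y a = y b" and small: "real CARD('n) * real CARD('n) * M2 * K * (K * dist a b) powr \<alpha> < c0"
  shows "a = b"
proof (rule ccontr)
  assume ne: "a \<noteq> b"
  let ?N = "real CARD('n) * real CARD('n)"
  define T where "T = K * dist a b"
  define B where "B = ?N * M2 * T powr \<alpha>"
  define \<phi> where "\<phi> x = y x - Dy a *v x" for x
  have Bnn: "B \<ge> 0" unfolding B_def using M2 by simp
  have d1: "dist x a \<le> T" if "x \<in> closed_segment a p1" for x
    using dist_in_closed_segment[OF that] path(4) zero_le_dist[of p1 p2] zero_le_dist[of p2 b] unfolding T_def by linarith
  have d2: "dist x a \<le> T" if "x \<in> closed_segment p1 p2" for x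
  proof -
    have "dist x a \<le> dist x p1 + dist p1 a" by (rule dist_triangle)
    also have "\<dots> \<le> dist p1 p2 + dist a p1" using dist_in_closed_segment[OF that] by (simp add: dist_commute)
    finally show ?thesis using path(4) zero_le_dist[of p2 b] unfolding T_def by linarith
  qed
  have d3: "dist x a \<le> T" if "x \<in> closed_segment p2 b" for x
  proof -
    have "dist x a \<le> dist x p2 + dist p2 a" by (rule dist_triangle)
    moreover have "dist p2 a \<le> dist p2 p1 + dist p1 a" by (rule dist_triangle)
    ultimately have "dist x a \<le> dist x p2 + dist p2 p1 + dist p1 a" by linarith
    also have "\<dots> \<le> dist p2 b + dist p1 p2 + dist a p1" using dist_in_closed_segment[OF that] by (simp add: dist_commute)
    finally show ?thesis using path(4) unfolding T_def by linarith
  qed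
  have e1: "norm (\<phi> a - \<phi> p1) \<le> B * dist a p1" unfolding \<phi>_def B_def
    by (rule seg_phi[OF der hol M2 al a path(1)]) (use d1 in blast)
  have e2: "norm (\<phi> p1 - \<phi> p2) \<le> B * dist p1 p2" unfolding \<phi>_def B_def
    by (rule seg_phi[OF der hol M2 al a path(2)]) (use d2 in blast)
  have e3: "norm (\<phi> p2 - \<phi> b) \<le> B * dist p2 b" unfolding \<phi>_def B_def
    by (rule seg_phi[OF der hol M2 al a path(3)]) (use d3 in blast)
  have "norm (\<phi> a - \<phi> b) \<le> norm (\<phi> a - \<phi> p1) + norm (\<phi> p1 - \<phi> p2) + norm (\<phi> p2 - \<phi> b)"
  proof -
    have "\<phi> a - \<phi> b = ((\<phi> a - \<phi> p1) + (\<phi> p1 - \<phi> p2)) + (\<phi> p2 - \<phi> b)" by simp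
    then have "norm (\<phi> a - \<phi> b) \<le> norm ((\<phi> a - \<phi> p1) + (\<phi> p1 - \<phi> p2)) + norm (\<phi> p2 - \<phi> b)"
      by (metis norm_triangle_ineq)
    moreover have "norm ((\<phi> a - \<phi> p1) + (\<phi> p1 - \<phi> p2)) \<le> norm (\<phi> a - \<phi> p1) + norm (\<phi> p1 - \<phi> p2)"
      by (rule norm_triangle_ineq)
    ultimately show ?thesis by linarith
  qed
  also have "\<dots> \<le> B * (dist a p1 + dist p1 p2 + dist p2 b)" using e1 e2 e3 by (simp add: algebra_simps)
  also have "\<dots> \<le> B * (K * dist a b)" using path(4) Bnn by (rule mult_left_mono)
  finally have up: "norm (\<phi> a - \<phi> b) \<le> B * K * dist a b" by (simp add: mult.assoc)
  have "\<phi> a - \<phi> b = Dy a *v (b - a)" unfolding \<phi>_def using yab by (simp add: matrix_vector_mult_diff_distrib)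
  moreover have "c0 * norm (b - a) \<le> norm (Dy a *v (b - a))" using c0 by blast
  ultimately have "c0 * dist a b \<le> norm (\<phi> a - \<phi> b)" by (simp add: dist_norm norm_minus_commute)
  with up have "c0 * dist a b \<le> B * K * dist a b" by linarith
  moreover have "dist a b > 0" using ne by simp
  ultimately have "c0 \<le> B * K" by simp
  then show False using small unfolding B_def T_def by (simp add: algebra_simps)
qed




lemma energy_lower:
  fixes \<Omega> :: "(real^'n) set" and y :: "real^'n \<Rightarrow> real^'n" and g :: "real \<Rightarrow> real"
  assumes eps: "\<epsilon> > 0" and G: "G \<ge> 0" and r1: "r1 > 0"
    and inB: "\<And>w. w \<in> ball c r1 \<Longrightarrow> fst w \<in> \<Omega> \<and> snd w \<in> \<Omega> \<and>
        G \<le> g (dist (snd w) (fst w)) - g (dist (y (snd w)) (y (fst w)) / \<epsilon>)"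
  shows "ennreal (1 / \<epsilon> powr \<beta> * ((1 / \<epsilon> ^ CARD('n)) * G) *
           (unit_ball_vol (real DIM((real^'n) \<times> (real^'n))) * r1 ^ DIM((real^'n) \<times> (real^'n)))) \<le> E_CN g \<beta> \<Omega> \<epsilon> y"
proof -
  define q where "q = (1 / \<epsilon> ^ CARD('n)) * G"
  have q: "q \<ge> 0" unfolding q_def using eps G by simp
  let ?V = "unit_ball_vol (real DIM((real^'n) \<times> (real^'n))) * r1 ^ DIM((real^'n) \<times> (real^'n))"
  have V: "?V \<ge> 0" using r1 by simp
  have "(\<integral>\<^sup>+ w. ennreal q * indicator (ball c r1) w \<partial>lborel) \<le>
        (\<integral>\<^sup>+ w. indicator (\<Omega> \<times> \<Omega>) w *
        ennreal ((1 / \<epsilon> ^ CARD('n)) *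
          max 0 (g (dist (snd w) (fst w)) - g (dist (y (snd w)) (y (fst w)) / \<epsilon>))) \<partial>lborel)"
  proof (rule nn_integral_mono)
    fix w :: "(real^'n) \<times> (real^'n)"
    show "ennreal q * indicator (ball c r1) w \<le> indicator (\<Omega> \<times> \<Omega>) w *
        ennreal ((1 / \<epsilon> ^ CARD('n)) *
          max 0 (g (dist (snd w) (fst w)) - g (dist (y (snd w)) (y (fst w)) / \<epsilon>)))"
    proof (cases "w \<in> ball c r1")
      case True
      note h = inB[OF True]
      have "w \<in> \<Omega> \<times> \<Omega>" using h by (cases w) auto
      moreover have "q \<le> (1 / \<epsilon> ^ CARD('n)) *
          max 0 (g (dist (snd w) (fst w)) - g (dist (y (snd w)) (y (fst w)) / \<epsilon>))"
        unfolding q_def using h eps by (intro mult_left_mono) auto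
      ultimately show ?thesis using True by (simp add: ennreal_leI)
    qed simp
  qed
  also have "(\<integral>\<^sup>+ w. ennreal q * indicator (ball c r1) w \<partial>lborel) = ennreal q * emeasure lborel (ball c r1)"
    by (rule nn_integral_cmult_indicator) simp
  also have "emeasure lborel (ball c r1) = ennreal ?V" using r1 by (intro emeasure_ball) simp
  finally have I: "ennreal q * ennreal ?V \<le> (\<integral>\<^sup>+ w. indicator (\<Omega> \<times> \<Omega>) w *
        ennreal ((1 / \<epsilon> ^ CARD('n)) *
          max 0 (g (dist (snd w) (fst w)) - g (dist (y (snd w)) (y (fst w)) / \<epsilon>))) \<partial>lborel)" .
  have "ennreal (1 / \<epsilon> powr \<beta> * q * ?V) = ennreal (1 / \<epsilon> powr \<beta>) * (ennreal q * ennreal ?V)"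
  proof -
    have "0 \<le> 1 / \<epsilon> powr \<beta>" using eps by simp
    then have "ennreal (1 / \<epsilon> powr \<beta> * (q * ?V)) = ennreal (1 / \<epsilon> powr \<beta>) * ennreal (q * ?V)"
      using q V by (intro ennreal_mult) auto
    moreover have "ennreal (q * ?V) = ennreal q * ennreal ?V" using q V by (intro ennreal_mult) auto
    ultimately show ?thesis by (simp only: mult.assoc)
  qed
  also have "\<dots> \<le> E_CN g \<beta> \<Omega> \<epsilon> y" unfolding E_CN_def using I by (rule mult_left_mono) simp
  finally show ?thesis unfolding q_def .
qed




lemma alg1: "(P::real) > 0 \<Longrightarrow> (1/Q) * ((1/P) * G) * (V * (K' * (P * P))) = G * V * K' * (P / Q)"
  by (simp add: field_simps)

lemma alg2: "(P::real) > 0 \<Longrightarrow> a > 0 \<Longrightarrow> P / (a * P) = 1 / a"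
  by simp

theorem corollary3p8:
  fixes \<Omega> :: "(real^'n) set" and g :: "real \<Rightarrow> real"
    and \<alpha> \<delta> M1 M2 C \<beta> :: real
  assumes "lipschitz_domain \<Omega>"
    and "continuous_on {0..} g" and "strict_mono_on {0..} g" and "g 0 = 0"
    and "g ` {0..} \<subseteq> {0..}"
    and "0 < \<alpha>" and "\<alpha> \<le> 1" and "\<delta> > 0" and "M1 > 0" and "M2 > 0" and "C > 0"
    and "\<beta> > real CARD('n)"
  shows "\<exists>\<epsilon>t > 0. \<forall>\<epsilon>2 y Dy. 0 < \<epsilon>2 \<and> \<epsilon>2 < \<epsilon>t \<and> C1alpha \<alpha> \<Omega> y Dy \<and>
            (\<forall>x \<in> \<Omega>. det (Dy x) \<ge> \<delta> \<and> norm (Dy x) \<le> M1) \<and>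
            holder_norm \<alpha> \<Omega> Dy \<le> M2 \<and>
            E_CN g \<beta> \<Omega> \<epsilon>2 y \<le> ennreal C
          \<longrightarrow> inj_on y \<Omega>"
proof -
  note LD = assms(1) and gcont = assms(2) and gmono = assms(3) and g0 = assms(4)
  note al = assms(6) and dl = assms(8) and M1 = assms(9) and M2 = assms(10) and C = assms(11) and bet = assms(12)
  have \<Omega>ne: "\<Omega> \<noteq> {}" using LD unfolding lipschitz_domain_def by blast
  obtain R0 K \<kappa> where R0: "R0 > 0" and K1: "K \<ge> 1" and \<kappa>: "\<kappa> > 0" "\<kappa> \<le> 1"
    and Qg: "\<forall>a\<in>\<Omega>. \<forall>b\<in>\<Omega>. dist a b < R0 \<longrightarrow> (\<exists>p1 p2. closed_segment a p1 \<subseteq> \<Omega> \<and> closed_segment p1 p2 \<subseteq> \<Omega> \<and>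
        closed_segment p2 b \<subseteq> \<Omega> \<and> dist a p1 + dist p1 p2 + dist p2 b \<le> K * dist a b)"
    and Pg: "\<forall>a\<in>\<Omega>. \<forall>\<rho>. 0 < \<rho> \<and> \<rho> \<le> R0 \<longrightarrow> (\<exists>c. closed_segment a c \<subseteq> \<Omega> \<and> dist a c \<le> \<rho> \<and> ball c (\<kappa> * \<rho>) \<subseteq> \<Omega>)"
    using global_geo[OF LD] by blast
  obtain c0 where c0: "c0 > 0" and c0A: "\<forall>(A::real^'n^'n) v. det A \<ge> \<delta> \<and> norm A \<le> M1 \<longrightarrow> c0 * norm v \<le> norm (A *v v)"
    using det_lower[OF dl, of M1] by blast
  define N where "N = real CARD('n) * real CARD('n)"
  have cn: "real CARD('n) \<ge> 1" by (simp add: Suc_leI)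
  have "1 * 1 \<le> real CARD('n) * real CARD('n)" using cn by (intro mult_mono) auto
  then have N1: "N \<ge> 1" unfolding N_def by simp
  define X0 where "X0 = c0 / (2 * (N * M2) * K)"
  have X0: "X0 > 0" unfolding X0_def using c0 N1 M2 K1 by simp
  define s0 where "s0 = (X0 powr (1/\<alpha>)) / K"
  have s0pos: "s0 > 0" unfolding s0_def using X0 K1 by simp
  have s0eq: "(K * s0) powr \<alpha> = X0"
  proof -
    have "K * s0 = X0 powr (1/\<alpha>)" unfolding s0_def using K1 by simp
    then have "(K * s0) powr \<alpha> = X0 powr ((1/\<alpha>) * \<alpha>)" by (simp add: powr_powr)
    also have "\<dots> = X0" using al X0 by simp
    finally show ?thesis .
  qed
  define r0 where "r0 = min R0 s0"
  have r0: "r0 > 0" "r0 \<le> R0" "r0 \<le> s0" unfolding r0_def using R0 s0pos by auto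
  define G0 where "G0 = g (r0/2)"
  have G0: "G0 > 0" unfolding G0_def using strict_mono_onD[OF gmono, of 0 "r0/2"] r0 g0 by simp
  obtain dd where dd: "dd > 0" "\<And>t. 0 \<le> t \<Longrightarrow> t < dd \<Longrightarrow> g t < G0/2"
  proof -
    have "\<exists>d>0. \<forall>x'\<in>{0..}. dist x' 0 < d \<longrightarrow> dist (g x') (g 0) < G0/2"
      using gcont G0 unfolding continuous_on_iff by (meson atLeast_iff half_gt_zero order_refl)
    then obtain d where "d > 0" "\<forall>x'\<in>{0..}. dist x' 0 < d \<longrightarrow> dist (g x') (g 0) < G0/2" by blast
    then have "d > 0" "\<And>t. 0 \<le> t \<Longrightarrow> t < d \<Longrightarrow> g t < G0/2"
      using g0 by (auto simp: dist_real_def)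
    then show ?thesis by (rule that)
  qed
  define t0 where "t0 = dd/2"
  have t0: "t0 > 0" "t0 < dd" unfolding t0_def using dd by auto
  define L1 where "L1 = N * M1"
  have L1: "L1 > 0" unfolding L1_def using N1 M1 by simp
  define V where "V = unit_ball_vol (real DIM((real^'n) \<times> (real^'n)))"
  have V: "V > 0" unfolding V_def by simp
  define m where "m = DIM((real^'n) \<times> (real^'n))"
  have m: "m = CARD('n) + CARD('n)" unfolding m_def by simp
  define nn where "nn = real CARD('n)"
  have bn: "\<beta> - nn > 0" unfolding nn_def using bet by simp
  define A where "A = (G0/2) * V * (\<kappa> * t0 / (4 * L1)) ^ m"
  have A: "A > 0" unfolding A_def using G0 V \<kappa> t0 L1 by simp
  define mn where "mn = min R0 (r0/8)"
  have mn: "mn > 0" unfolding mn_def using R0 r0 by simp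
  define et where "et = min (4 * L1 * mn / t0) ((A/C) powr (1/(\<beta> - nn)))"
  have et: "et > 0" unfolding et_def using L1 mn t0 A C by simp
  show ?thesis
  proof (intro exI[of _ et] conjI allI impI)
    show "et > 0" by (rule et)
    fix \<epsilon> y Dy
    assume H: "0 < \<epsilon> \<and> \<epsilon> < et \<and> C1alpha \<alpha> \<Omega> y Dy \<and>
            (\<forall>x \<in> \<Omega>. det (Dy x) \<ge> \<delta> \<and> norm (Dy x) \<le> M1) \<and>
            holder_norm \<alpha> \<Omega> Dy \<le> M2 \<and>
            E_CN g \<beta> \<Omega> \<epsilon> y \<le> ennreal C"
    then have eps: "0 < \<epsilon>" "\<epsilon> < et" and C1: "C1alpha \<alpha> \<Omega> y Dy"
      and bds: "\<forall>x \<in> \<Omega>. det (Dy x) \<ge> \<delta> \<and> norm (Dy x) \<le> M1"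
      and hn: "holder_norm \<alpha> \<Omega> Dy \<le> M2" and EC: "E_CN g \<beta> \<Omega> \<epsilon> y \<le> ennreal C" by auto
    have der: "\<forall>x\<in>\<Omega>. (y has_derivative (\<lambda>v. Dy x *v v)) (at x)"
      and bddn: "bdd_above ((\<lambda>x. norm (Dy x)) ` \<Omega>)"
      and bddq: "bdd_above (holder_quotients \<alpha> \<Omega> Dy)"
      using C1 unfolding C1alpha_def by auto
    have bd: "\<forall>x\<in>\<Omega>. norm (Dy x) \<le> M1" using bds by blast
    have semi: "holder_seminorm \<alpha> \<Omega> Dy \<le> M2"
    proof -
      obtain x0 where x0: "x0 \<in> \<Omega>" using \<Omega>ne by blast
      have "norm (Dy x0) \<le> sup_norm_on \<Omega> Dy" unfolding sup_norm_on_def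
        using x0 bddn by (intro cSup_upper) auto
      then have "0 \<le> sup_norm_on \<Omega> Dy" by (meson norm_ge_zero order_trans)
      then show ?thesis using hn unfolding holder_norm_def by linarith
    qed
    have hol: "\<forall>x\<in>\<Omega>. \<forall>z\<in>\<Omega>. norm (Dy x - Dy z) \<le> M2 * dist x z powr \<alpha>"
    proof (intro ballI)
      fix x z assume xz: "x \<in> \<Omega>" "z \<in> \<Omega>"
      show "norm (Dy x - Dy z) \<le> M2 * dist x z powr \<alpha>"
      proof (cases "x = z")
        case True then show ?thesis by simp
      next
        case False
        define q where "q = norm (Dy x - Dy z) / (dist x z powr \<alpha>)"
        have "q \<in> holder_quotients \<alpha> \<Omega> Dy" unfolding q_def holder_quotients_def using xz False by blast
        then have "q \<le> holder_seminorm \<alpha> \<Omega> Dy" unfolding holder_seminorm_def using bddq by (intro cSup_upper)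
        then have "q \<le> M2" using semi by linarith
        moreover have "dist x z powr \<alpha> > 0" using False by simp
        ultimately show ?thesis unfolding q_def by (simp add: divide_le_eq)
      qed
    qed
    have lip: "norm (y u - y v) \<le> L1 * dist u v" if "closed_segment u v \<subseteq> \<Omega>" for u v
      unfolding L1_def N_def by (rule seg_lip[OF der bd that])
    show "inj_on y \<Omega>"
    proof (rule inj_onI, rule ccontr)
      fix a b assume a: "a \<in> \<Omega>" and b: "b \<in> \<Omega>" and yab: "y a = y b" and ne: "a \<noteq> b"
      have Dr0: "dist a b \<ge> r0"
      proof (rule ccontr)
        assume "\<not> r0 \<le> dist a b"
        then have Dlt: "dist a b < r0" by simp
        then obtain p1 p2 where path: "closed_segment a p1 \<subseteq> \<Omega>" "closed_segment p1 p2 \<subseteq> \<Omega>"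
          "closed_segment p2 b \<subseteq> \<Omega>" "dist a p1 + dist p1 p2 + dist p2 b \<le> K * dist a b"
          using Qg a b r0 by (meson less_le_trans)
        have "(K * dist a b) powr \<alpha> \<le> (K * s0) powr \<alpha>"
          using Dlt r0 K1 al by (intro powr_mono2 mult_left_mono) auto
        then have "N * M2 * K * (K * dist a b) powr \<alpha> \<le> N * M2 * K * X0"
          using s0eq N1 M2 K1 by (intro mult_left_mono) auto
        also have "\<dots> = c0 / 2" unfolding X0_def using N1 M2 K1 by (simp add: field_simps)
        finally have sm: "real CARD('n) * real CARD('n) * M2 * K * (K * dist a b) powr \<alpha> < c0"
          using c0 unfolding N_def by linarith
        have c0a: "\<forall>v. c0 * norm v \<le> norm (Dy a *v v)" using c0A bds a by blast
        have "a = b"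
          by (rule local_inj[OF der hol _ al a b K1 path c0a yab sm]) (use M2 in simp)
        with ne show False by simp
      qed
      define \<rho> where "\<rho> = \<epsilon> * t0 / (4 * L1)"
      have \<rho>pos: "\<rho> > 0" unfolding \<rho>_def using eps t0 L1 by simp
      have "\<rho> < et * t0 / (4 * L1)" unfolding \<rho>_def using eps t0 L1
        by (intro divide_strict_right_mono mult_strict_right_mono) auto
      also have "\<dots> \<le> (4 * L1 * mn / t0) * t0 / (4 * L1)"
        unfolding et_def using t0 L1 by (intro divide_right_mono mult_right_mono) auto
      also have "\<dots> = mn" using t0 L1 by simp
      finally have \<rho>mn: "\<rho> < mn" .
      have \<rho>R0: "\<rho> \<le> R0" and \<rho>r0: "\<rho> \<le> r0/8" using \<rho>mn unfolding mn_def by auto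
      obtain ca where ca: "closed_segment a ca \<subseteq> \<Omega>" "dist a ca \<le> \<rho>" "ball ca (\<kappa> * \<rho>) \<subseteq> \<Omega>"
        using Pg a \<rho>pos \<rho>R0 by blast
      obtain cb where cb: "closed_segment b cb \<subseteq> \<Omega>" "dist b cb \<le> \<rho>" "ball cb (\<kappa> * \<rho>) \<subseteq> \<Omega>"
        using Pg b \<rho>pos \<rho>R0 by blast
      define r1 where "r1 = \<kappa> * \<rho>"
      have r1: "r1 > 0" "r1 \<le> \<rho>" unfolding r1_def using \<kappa> \<rho>pos by (auto simp: mult_left_le_one_le)
      have near: "dist c u \<le> 2 * \<rho> \<and> dist (y c) (y u) \<le> 2 * L1 * \<rho> \<and> u \<in> \<Omega>"
        if "closed_segment c cc \<subseteq> \<Omega>" "dist c cc \<le> \<rho>" "ball cc (\<kappa> * \<rho>) \<subseteq> \<Omega>" "dist cc u < r1" for c cc u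
      proof -
        have ub: "u \<in> ball cc r1" using that(4) by simp
        have sb: "closed_segment cc u \<subseteq> ball cc r1"
          using ub r1 by (intro closed_segment_subset) auto
        then have s2: "closed_segment cc u \<subseteq> \<Omega>" using that(3) unfolding r1_def by blast
        have "u \<in> \<Omega>" using s2 by auto
        moreover have "dist c u \<le> dist c cc + dist cc u" by (rule dist_triangle)
        moreover have "dist (y c) (y u) \<le> dist (y c) (y cc) + dist (y cc) (y u)" by (rule dist_triangle)
        moreover have "dist (y c) (y cc) \<le> L1 * dist c cc" using lip[OF that(1)] by (simp add: dist_norm)
        moreover have "dist (y cc) (y u) \<le> L1 * dist cc u" using lip[OF s2] by (simp add: dist_norm)
        moreover have "L1 * dist c cc \<le> L1 * \<rho>" using that(2) L1 by (intro mult_left_mono) auto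
        moreover have "L1 * dist cc u \<le> L1 * \<rho>" using that(4) r1 L1 by (intro mult_left_mono) auto
        ultimately show ?thesis using that r1 by auto
      qed
      have inB: "fst w \<in> \<Omega> \<and> snd w \<in> \<Omega> \<and>
        G0/2 \<le> g (dist (snd w) (fst w)) - g (dist (y (snd w)) (y (fst w)) / \<epsilon>)"
        if w: "w \<in> ball (ca, cb) r1" for w
      proof -
        have "dist ca (fst w) < r1" using w dist_fst_le[of "(ca, cb)" w] by simp
        note na = near[OF ca this]
        have "dist cb (snd w) < r1" using w dist_snd_le[of "(ca, cb)" w] by simp
        note nb = near[OF cb this]
        have "dist (y (snd w)) (y (fst w)) \<le> dist (y (snd w)) (y b) + dist (y b) (y (fst w))"
          by (rule dist_triangle)
        then have dy: "dist (y (snd w)) (y (fst w)) \<le> 4 * L1 * \<rho>"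
          using na nb yab by (simp add: dist_commute)
        have "4 * L1 * \<rho> = \<epsilon> * t0" unfolding \<rho>_def using L1 by simp
        then have "dist (y (snd w)) (y (fst w)) / \<epsilon> \<le> t0" using dy eps by (simp add: divide_le_eq mult.commute)
        then have g1: "g (dist (y (snd w)) (y (fst w)) / \<epsilon>) < G0/2"
          using dd(2) t0 eps by simp
        have "dist a b \<le> dist a (fst w) + dist (fst w) (snd w) + dist (snd w) b"
          by (meson dist_triangle order_trans add_right_mono dist_triangle)
        then have "dist (snd w) (fst w) \<ge> r0/2" using na nb Dr0 \<rho>r0 by (simp add: dist_commute)
        then have "g (r0/2) \<le> g (dist (snd w) (fst w))"
          using strict_mono_onD[OF gmono, of "r0/2" "dist (snd w) (fst w)"] r0
          by (cases "r0/2 = dist (snd w) (fst w)") auto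
        then show ?thesis using g1 na nb unfolding G0_def by simp
      qed
      have low: "ennreal (1 / \<epsilon> powr \<beta> * ((1 / \<epsilon> ^ CARD('n)) * (G0/2)) *
           (unit_ball_vol (real DIM((real^'n) \<times> (real^'n))) * r1 ^ DIM((real^'n) \<times> (real^'n)))) \<le> E_CN g \<beta> \<Omega> \<epsilon> y"
        by (rule energy_lower[OF eps(1) _ r1(1) inB]) (use G0 in simp)
      define Xv where "Xv = 1 / \<epsilon> powr \<beta> * ((1 / \<epsilon> ^ CARD('n)) * (G0/2)) * (V * r1 ^ m)"
      have "ennreal Xv \<le> ennreal C" using low EC unfolding Xv_def V_def m_def by simp
      then have XC: "Xv \<le> C" using C by simp
      have r1e: "r1 = (\<kappa> * t0 / (4 * L1)) * \<epsilon>" unfolding r1_def \<rho>_def by simp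
      have r1m: "r1 ^ m = (\<kappa> * t0 / (4 * L1)) ^ m * (\<epsilon> ^ CARD('n) * \<epsilon> ^ CARD('n))"
      proof -
        have "r1 ^ m = (\<kappa> * t0 / (4 * L1)) ^ m * \<epsilon> ^ m" unfolding r1e by (rule power_mult_distrib)
        also have "\<epsilon> ^ m = \<epsilon> ^ CARD('n) * \<epsilon> ^ CARD('n)" unfolding m by (rule power_add)
        finally show ?thesis .
      qed
      have "Xv = A * (\<epsilon> ^ CARD('n) / \<epsilon> powr \<beta>)"
        unfolding Xv_def A_def r1m by (rule alg1) (use eps in simp)
      also have "\<epsilon> ^ CARD('n) / \<epsilon> powr \<beta> = 1 / \<epsilon> powr (\<beta> - nn)"
      proof -
        have "\<epsilon> powr \<beta> = \<epsilon> powr (\<beta> - nn) * \<epsilon> powr nn" by (simp add: powr_add[symmetric])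
        moreover have "\<epsilon> powr nn = \<epsilon> ^ CARD('n)" unfolding nn_def using eps by (simp add: powr_realpow)
        moreover have "\<epsilon> powr (\<beta> - nn) > 0" "\<epsilon> ^ CARD('n) > 0" using eps by simp_all
        ultimately show ?thesis by (simp only:) (rule alg2)
      qed
      finally have Xv: "Xv = A / \<epsilon> powr (\<beta> - nn)" by simp
      have "\<epsilon> powr (\<beta> - nn) < et powr (\<beta> - nn)" using eps bn by (intro powr_less_mono2) auto
      also have "\<dots> \<le> ((A/C) powr (1/(\<beta> - nn))) powr (\<beta> - nn)"
        unfolding et_def using bn L1 mn t0 by (intro powr_mono2) auto
      also have "\<dots> = A / C" using bn A C by (simp add: powr_powr)
      finally have "\<epsilon> powr (\<beta> - nn) < A / C" .
      then have "\<epsilon> powr (\<beta> - nn) * C < A" using C by (simp add: pos_less_divide_eq)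
      moreover have "\<epsilon> powr (\<beta> - nn) > 0" using eps by simp
      ultimately have "C < Xv" unfolding Xv by (simp add: pos_less_divide_eq mult.commute)
      with XC show False by simp
    qed
  qed
qed


end
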